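(* Fix a scalar $\theta$ and $h,g\in\mathcal{F}$. Assume there exist $\mu_h,\mu_g\in\mathcal{F}$ such that for every bounded $\gamma:\mathcal{A}\times\mathcal{X}\to\mathbb{R}$, $$\tfrac{d}{d\tau}\mathbb{E}[m(a,x;\theta,h+\tau\gamma,g)]\big|_{\tau=0}=\mathbb{E}[\mu_h(a,x)\gamma(a,x)],\qquad \tfrac{d}{d\tau}\mathbb{E}[m(a,x;\theta,h,g+\tau\gamma)]\big|_{\tau=0}=\mathbb{E}[\mu_g(a,x)\gamma(a,x)].$$ Let $\lambda_h,\lambda_g\in\mathcal{F}$ be the unique fixed points of $\Gamma^\dagger_h[f](a,x):=-\mu_h(a,x)+\beta\mathbb{E}[f(a^-,x^-)\mid a,x]$ and $\Gamma^\dagger_g[f](a,x):=-\mu_g(a,x)+\beta\mathbb{E}[f(a^-,x^-)\mid a,x]$ respectively, and define $$\zeta(a,x;\theta,h,g):=m(a,x;\theta,h,g)-\lambda_h(a,x)\{z(a,x)+\beta h(a',x')-h(a,x)\}-\lambda_g(a,x)\{e(a',x')+\beta g(a',x')-g(a,x)\}.$$ Then for every bounded $\gamma$, $$\tfrac{d}{d\tau}\mathbb{E}[\zeta(a,x;\theta,h+\tau\gamma,g)]\big|_{\tau=0}=0\quad\text{and}\quad\tfrac{d}{d\tau}\mathbb{E}[\zeta(a,x;\theta,h,g+\tau\gamma)]\big|_{\tau=0}=0.$$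
   Context: $\mathcal{A}$ is a finite action set, $\mathcal{X}$ a state space, $\beta\in(0,1)$. $(a,x,a',x')$ has joint law $\mathbb{P}$ (expectation $\mathbb{E}$), $(a',x')$ being the pair one period after $(a,x)$; stationarity holds, and $(a^-,x^-)$ denotes the pair one period before $(a,x)$, so that $(a^-,x^-,a,x)$ has the same joint law as $(a,x,a',x')$. $\mathcal{F}$ is the space of square-integrable functions on $\mathcal{A}\times\mathcal{X}$ under the law of $(a,x)$. $z:\mathcal{A}\times\mathcal{X}\to\mathbb{R}$ is bounded and $e:\mathcal{A}\times\mathcal{X}\to\mathbb{R}$ is bounded (in the paper $e(a,x)=\gamma_{\rm Euler}-\ln\mathbb{P}(a\mid x)$). For functions $h,g$, $m(a,x;\theta,h,g):=\partial_\theta\ln\pi_{\theta,h,g}(a,x)$ with $\pi_{\theta,h,g}(a,x):=\exp\{h(a,x)\theta+g(a,x)\}/\sum_{\breve a\in\mathcal{A}}\exp\{h(\breve a,x)\theta+g(\breve a,x)\}$. *)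

theory Defs
  imports "HOL-Probability.Probability"
begin

definition stateM :: "'x measure \<Rightarrow> ('a::finite \<times> 'x) measure" where
  "stateM X = count_space UNIV \<Otimes>\<^sub>M X"

definition inF :: "('a \<times> 'x) measure \<Rightarrow> ('a \<times> 'x \<Rightarrow> real) \<Rightarrow> bool" where
  "inF P0 f \<longleftrightarrow> f \<in> borel_measurable P0 \<and> integrable P0 (\<lambda>s. (f s)^2)"

definition ccp :: "real \<Rightarrow> ('a::finite \<times> 'x \<Rightarrow> real) \<Rightarrow> ('a \<times> 'x \<Rightarrow> real) \<Rightarrow> 'a \<times> 'x \<Rightarrow> real" where
  "ccp \<theta> h g s = exp (h s * \<theta> + g s) /
     (\<Sum>b\<in>UNIV. exp (h (b, snd s) * \<theta> + g (b, snd s)))"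

definition mfun :: "real \<Rightarrow> ('a::finite \<times> 'x \<Rightarrow> real) \<Rightarrow> ('a \<times> 'x \<Rightarrow> real) \<Rightarrow> 'a \<times> 'x \<Rightarrow> real" where
  "mfun \<theta> h g s = deriv (\<lambda>t. ln (ccp t h g s)) \<theta>"

text \<open>zeta evaluated at an outcome w = ((a,x),(a',x')).\<close>
definition zeta :: "('a \<times> 'x \<Rightarrow> real) \<Rightarrow> ('a \<times> 'x \<Rightarrow> real) \<Rightarrow> ('a \<times> 'x \<Rightarrow> real)
     \<Rightarrow> ('a \<times> 'x \<Rightarrow> real) \<Rightarrow> real \<Rightarrow> real \<Rightarrow> ('a \<times> 'x \<Rightarrow> real) \<Rightarrow> ('a::finite \<times> 'x \<Rightarrow> real)
     \<Rightarrow> ('a \<times> 'x) \<times> ('a \<times> 'x) \<Rightarrow> real" where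
  "zeta lh lg z e \<beta> \<theta> h g w =
     mfun \<theta> h g (fst w)
     - lh (fst w) * (z (fst w) + \<beta> * h (snd w) - h (fst w))
     - lg (fst w) * (e (snd w) + \<beta> * g (snd w) - g (fst w))"

end

theory Submission
  imports Defs
begin

lemma abs_prod_le: "\<bar>(a::real) * b\<bar> \<le> a^2 + b^2"
proof -
  have "0 \<le> (\<bar>a\<bar> - \<bar>b\<bar>)^2" by simp
  hence "2 * (\<bar>a\<bar> * \<bar>b\<bar>) \<le> \<bar>a\<bar>^2 + \<bar>b\<bar>^2" by (simp add: power2_eq_square algebra_simps)
  moreover have "0 \<le> \<bar>a\<bar> * \<bar>b\<bar>" by simp
  moreover have "\<bar>a * b\<bar> = \<bar>a\<bar> * \<bar>b\<bar>" by (simp add: abs_mult)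
  moreover have "\<bar>a\<bar>^2 = a^2" "\<bar>b\<bar>^2 = b^2" by simp_all
  ultimately show ?thesis by linarith
qed

lemma L2_prod:
  fixes F G :: "'b \<Rightarrow> real"
  assumes "integrable M (\<lambda>w. (F w)^2)" "integrable M (\<lambda>w. (G w)^2)"
    and [measurable]: "F \<in> borel_measurable M" "G \<in> borel_measurable M"
  shows "integrable M (\<lambda>w. F w * G w)"
proof -
  have "integrable M (\<lambda>w. (F w)^2 + (G w)^2)" using assms by simp
  moreover have "(\<lambda>w. F w * G w) \<in> borel_measurable M" by measurable
  moreover have "AE x in M. norm (F x * G x) \<le> norm ((F x)^2 + (G x)^2)"
    using abs_prod_le by auto
  ultimately show ?thesis by (rule Bochner_Integration.integrable_bound)
qed

lemma key:
  fixes M :: "(('a::finite \<times> 'x) \<times> ('a \<times> 'x)) measure" and S :: "('a \<times> 'x) measure"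
    and lam mu \<gamma> :: "'a \<times> 'x \<Rightarrow> real" and \<beta> :: real
  assumes prob: "prob_space M"
    and fst_m: "fst \<in> measurable M S" and snd_m: "snd \<in> measurable M S"
    and stat: "\<And>f::'a \<times> 'x \<Rightarrow> real. f \<in> borel_measurable S \<Longrightarrow> integral\<^sup>L M (\<lambda>w. f (snd w)) = integral\<^sup>L M (\<lambda>w. f (fst w))"
    and pr: "\<And>f k. f \<in> {lam, mu, \<gamma>} \<Longrightarrow> k \<in> {lam, mu, \<gamma>} \<Longrightarrow>
        integrable M (\<lambda>w. f (snd w) * k (snd w)) \<and> integrable M (\<lambda>w. f (fst w) * k (snd w))"
    and ms: "lam \<in> borel_measurable S" "mu \<in> borel_measurable S" "\<gamma> \<in> borel_measurable S"
    and fx: "AE w in M. lam (snd w) = - mu (snd w)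
        + \<beta> * real_cond_exp M (vimage_algebra (space M) snd S) (\<lambda>v. lam (fst v)) w"
  shows "integral\<^sup>L M (\<lambda>w. mu (fst w) * \<gamma> (fst w)) =
     \<beta> * integral\<^sup>L M (\<lambda>w. lam (fst w) * \<gamma> (snd w)) - integral\<^sup>L M (\<lambda>w. lam (fst w) * \<gamma> (fst w))"
proof -
  interpret prob_space M by (rule prob)
  define F where "F = vimage_algebra (space M) snd S"
  define r where "r = real_cond_exp M F (\<lambda>v. lam (fst v))"
  have sfun: "snd \<in> space M \<rightarrow> space S" using snd_m by (simp add: measurable_space)
  have "subalgebra M F"
    unfolding subalgebra_def F_def
    using sets_vimage_algebra2[OF sfun] measurable_sets[OF snd_m] by auto
  then interpret sigma_finite_subalgebra M F
    by (intro finite_measure_subalgebra_is_sigma_finite) (simp add: finite_measure_subalgebra_def finite_measure_subalgebra_axioms_def finite_measure_axioms)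
  have [measurable]: "lam \<in> borel_measurable S" "mu \<in> borel_measurable S" "\<gamma> \<in> borel_measurable S"
    "fst \<in> measurable M S" "snd \<in> measurable M S" using ms fst_m snd_m by auto
  have gF: "(\<lambda>w. \<gamma> (snd w)) \<in> borel_measurable F"
    unfolding F_def by (rule measurable_compose[OF measurable_vimage_algebra1[OF sfun] ms(3)])
  have i1: "integrable M (\<lambda>w. \<gamma> (snd w) * lam (fst w))"
    using pr[of lam \<gamma>] by (simp add: mult.commute)
  have ce: "integral\<^sup>L M (\<lambda>w. \<gamma> (snd w) * r w) = integral\<^sup>L M (\<lambda>w. \<gamma> (snd w) * lam (fst w))"
    unfolding r_def by (rule real_cond_exp_intg(2)[OF i1 gF]) measurable
  have rm[measurable]: "r \<in> borel_measurable M" unfolding r_def by (rule borel_measurable_cond_exp2)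
  have "integral\<^sup>L M (\<lambda>w. \<beta> * (\<gamma> (snd w) * r w)) =
      integral\<^sup>L M (\<lambda>w. lam (snd w) * \<gamma> (snd w) + mu (snd w) * \<gamma> (snd w))"
  proof (rule integral_cong_AE)
    show "AE w in M. \<beta> * (\<gamma> (snd w) * r w) = lam (snd w) * \<gamma> (snd w) + mu (snd w) * \<gamma> (snd w)"
      using fx unfolding r_def F_def by eventually_elim (simp add: algebra_simps, metis distrib_left mult.left_commute)
  qed measurable
  also have "\<dots> = integral\<^sup>L M (\<lambda>w. lam (snd w) * \<gamma> (snd w)) + integral\<^sup>L M (\<lambda>w. mu (snd w) * \<gamma> (snd w))"
    using pr[of lam \<gamma>] pr[of mu \<gamma>] by (intro Bochner_Integration.integral_add) auto
  also have "\<dots> = integral\<^sup>L M (\<lambda>w. lam (fst w) * \<gamma> (fst w)) + integral\<^sup>L M (\<lambda>w. mu (fst w) * \<gamma> (fst w))"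
    using stat[of "\<lambda>s. lam s * \<gamma> s"] stat[of "\<lambda>s. mu s * \<gamma> s"] by simp
  finally have "\<beta> * integral\<^sup>L M (\<lambda>w. \<gamma> (snd w) * lam (fst w)) =
     integral\<^sup>L M (\<lambda>w. lam (fst w) * \<gamma> (fst w)) + integral\<^sup>L M (\<lambda>w. mu (fst w) * \<gamma> (fst w))"
    using ce by simp
  then show ?thesis by (simp add: mult.commute)
qed

theorem mainTheorem8:
  fixes M :: "(('a::finite \<times> 'x) \<times> ('a \<times> 'x)) measure"
    and X :: "'x measure"
    and \<beta> \<theta> :: real
    and z e h g mu_h mu_g lam_h lam_g :: "'a \<times> 'x \<Rightarrow> real"
  assumes prob: "prob_space M"
    and sets_M: "sets M = sets (stateM X \<Otimes>\<^sub>M stateM X)"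
    and stationary: "distr M (stateM X) fst = distr M (stateM X) snd"
    and beta: "0 < \<beta>" "\<beta> < 1"
    and z_meas: "z \<in> borel_measurable (stateM X)" and z_bdd: "bounded (range z)"
    and e_meas: "e \<in> borel_measurable (stateM X)" and e_bdd: "bounded (range e)"
    and h_F: "inF (distr M (stateM X) fst) h"
    and g_F: "inF (distr M (stateM X) fst) g"
    and muh_F: "inF (distr M (stateM X) fst) mu_h"
    and mug_F: "inF (distr M (stateM X) fst) mu_g"
    and deriv_h: "\<And>\<gamma>. \<gamma> \<in> borel_measurable (stateM X) \<Longrightarrow> bounded (range \<gamma>) \<Longrightarrow>
        (\<forall>\<^sub>F \<tau> in nhds 0. integrable M (\<lambda>w. mfun \<theta> (\<lambda>s. h s + \<tau> * \<gamma> s) g (fst w))) \<and>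
        ((\<lambda>\<tau>. integral\<^sup>L M (\<lambda>w. mfun \<theta> (\<lambda>s. h s + \<tau> * \<gamma> s) g (fst w)))
           has_real_derivative integral\<^sup>L M (\<lambda>w. mu_h (fst w) * \<gamma> (fst w))) (at 0)"
    and deriv_g: "\<And>\<gamma>. \<gamma> \<in> borel_measurable (stateM X) \<Longrightarrow> bounded (range \<gamma>) \<Longrightarrow>
        (\<forall>\<^sub>F \<tau> in nhds 0. integrable M (\<lambda>w. mfun \<theta> h (\<lambda>s. g s + \<tau> * \<gamma> s) (fst w))) \<and>
        ((\<lambda>\<tau>. integral\<^sup>L M (\<lambda>w. mfun \<theta> h (\<lambda>s. g s + \<tau> * \<gamma> s) (fst w)))
           has_real_derivative integral\<^sup>L M (\<lambda>w. mu_g (fst w) * \<gamma> (fst w))) (at 0)"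
    and lamh_F: "inF (distr M (stateM X) fst) lam_h"
    and lamg_F: "inF (distr M (stateM X) fst) lam_g"
    and lamh_fix: "AE w in M. lam_h (snd w) = - mu_h (snd w)
        + \<beta> * real_cond_exp M (vimage_algebra (space M) snd (stateM X)) (\<lambda>v. lam_h (fst v)) w"
    and lamg_fix: "AE w in M. lam_g (snd w) = - mu_g (snd w)
        + \<beta> * real_cond_exp M (vimage_algebra (space M) snd (stateM X)) (\<lambda>v. lam_g (fst v)) w"
  shows "\<forall>\<gamma>. \<gamma> \<in> borel_measurable (stateM X) \<longrightarrow> bounded (range \<gamma>) \<longrightarrow>
      ((\<lambda>\<tau>. integral\<^sup>L M (zeta lam_h lam_g z e \<beta> \<theta> (\<lambda>s. h s + \<tau> * \<gamma> s) g)) has_real_derivative 0) (at 0)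
    \<and> ((\<lambda>\<tau>. integral\<^sup>L M (zeta lam_h lam_g z e \<beta> \<theta> h (\<lambda>s. g s + \<tau> * \<gamma> s))) has_real_derivative 0) (at 0)"
proof -
  interpret prob_space M by (rule prob)
  let ?S = "stateM X"
  let ?P0 = "distr M ?S fst"
  have fst_m[measurable]: "fst \<in> measurable M ?S"
    by (subst measurable_cong_sets[OF sets_M refl]) (rule measurable_fst)
  have snd_m[measurable]: "snd \<in> measurable M ?S"
    by (subst measurable_cong_sets[OF sets_M refl]) (rule measurable_snd)
  have sq: "f \<in> borel_measurable ?S \<and> integrable M (\<lambda>w. (f (fst w))^2) \<and> integrable M (\<lambda>w. (f (snd w))^2)"
    if "inF ?P0 f" for f
  proof -
    have fm[measurable]: "f \<in> borel_measurable ?S" and i: "integrable ?P0 (\<lambda>s. (f s)^2)"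
      using that by (auto simp: inF_def)
    have i2: "integrable (distr M ?S snd) (\<lambda>s. (f s)^2)" using i stationary by simp
    show ?thesis using i i2 integrable_distr_eq[OF fst_m, of "\<lambda>s. (f s)^2"]
        integrable_distr_eq[OF snd_m, of "\<lambda>s. (f s)^2"] by auto
  qed
  have bddF: "inF ?P0 f" if fm: "f \<in> borel_measurable ?S" and fb: "bounded (range f)" for f
  proof -
    obtain B where B: "\<And>x. \<bar>f x\<bar> \<le> B" using fb unfolding bounded_iff by auto
    interpret P: prob_space ?P0 by (rule prob_space_distr[OF fst_m])
    have "integrable ?P0 (\<lambda>s. (f s)^2)"
    proof (rule P.integrable_const_bound[where B="B^2"])
      show "AE x in ?P0. norm ((f x)^2) \<le> B^2"
      proof (rule AE_I2)
        fix x
        have "\<bar>f x\<bar>^2 \<le> B^2" using B[of x] by (intro power_mono) auto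
        then show "norm ((f x)^2) \<le> B^2" by simp
      qed
      show "(\<lambda>s. (f s)^2) \<in> borel_measurable ?P0" using fm by simp
    qed
    then show ?thesis using fm by (simp add: inF_def)
  qed
  have prod: "integrable M (\<lambda>w. f (fst w) * k (fst w)) \<and> integrable M (\<lambda>w. f (fst w) * k (snd w))
      \<and> integrable M (\<lambda>w. f (snd w) * k (snd w))"
    if "inF ?P0 f" "inF ?P0 k" for f k
  proof -
    have [measurable]: "f \<in> borel_measurable ?S" "k \<in> borel_measurable ?S" using sq that by auto
    show ?thesis using sq[OF that(1)] sq[OF that(2)]
      by (intro conjI L2_prod) auto
  qed
  have stat: "integral\<^sup>L M (\<lambda>w. f (snd w)) = integral\<^sup>L M (\<lambda>w. f (fst w))"
    if "f \<in> borel_measurable ?S" for f :: "'a \<times> 'x \<Rightarrow> real"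
    using integral_distr[OF fst_m that] integral_distr[OF snd_m that] stationary by simp
  have zF: "inF ?P0 z" using bddF z_meas z_bdd by blast
  have eF: "inF ?P0 e" using bddF e_meas e_bdd by blast
  have msr[measurable]: "h \<in> borel_measurable ?S" "g \<in> borel_measurable ?S" "lam_h \<in> borel_measurable ?S"
    "lam_g \<in> borel_measurable ?S" "mu_h \<in> borel_measurable ?S" "mu_g \<in> borel_measurable ?S"
    using sq h_F g_F lamh_F lamg_F muh_F mug_F by auto
  show ?thesis
  proof (intro allI impI conjI)
    fix \<gamma> :: "'a \<times> 'x \<Rightarrow> real"
    assume gm: "\<gamma> \<in> borel_measurable ?S" and gb: "bounded (range \<gamma>)"
    have gF: "inF ?P0 \<gamma>" using bddF gm gb by blast
    have [measurable]: "\<gamma> \<in> borel_measurable ?S" using gm .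
    define P where "P = (\<lambda>w. lam_h (fst w) * z (fst w) + \<beta> * (lam_h (fst w) * h (snd w)) - lam_h (fst w) * h (fst w))"
    define R where "R = (\<lambda>w. lam_g (fst w) * e (snd w) + \<beta> * (lam_g (fst w) * g (snd w)) - lam_g (fst w) * g (fst w))"
    define Qh where "Qh = (\<lambda>w. \<beta> * (lam_h (fst w) * \<gamma> (snd w)) - lam_h (fst w) * \<gamma> (fst w))"
    define Qg where "Qg = (\<lambda>w. \<beta> * (lam_g (fst w) * \<gamma> (snd w)) - lam_g (fst w) * \<gamma> (fst w))"
    have iP: "integrable M P" unfolding P_def
      using prod[OF lamh_F zF] prod[OF lamh_F h_F] by auto
    have iR: "integrable M R" unfolding R_def
      using prod[OF lamg_F eF] prod[OF lamg_F g_F] by auto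
    have iQh: "integrable M Qh" unfolding Qh_def
      using prod[OF lamh_F gF] by auto
    have iQg: "integrable M Qg" unfolding Qg_def
      using prod[OF lamg_F gF] by auto
    have kh: "integral\<^sup>L M (\<lambda>w. mu_h (fst w) * \<gamma> (fst w)) = integral\<^sup>L M Qh"
    proof -
      have "integral\<^sup>L M (\<lambda>w. mu_h (fst w) * \<gamma> (fst w)) =
        \<beta> * integral\<^sup>L M (\<lambda>w. lam_h (fst w) * \<gamma> (snd w)) - integral\<^sup>L M (\<lambda>w. lam_h (fst w) * \<gamma> (fst w))"
        by (rule key[OF prob fst_m snd_m stat _ msr(3,5) gm lamh_fix])
           (use prod lamh_F muh_F gF in auto)
      also have "\<dots> = integral\<^sup>L M Qh" unfolding Qh_def using prod[OF lamh_F gF] by simp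
      finally show ?thesis .
    qed
    have kg: "integral\<^sup>L M (\<lambda>w. mu_g (fst w) * \<gamma> (fst w)) = integral\<^sup>L M Qg"
    proof -
      have "integral\<^sup>L M (\<lambda>w. mu_g (fst w) * \<gamma> (fst w)) =
        \<beta> * integral\<^sup>L M (\<lambda>w. lam_g (fst w) * \<gamma> (snd w)) - integral\<^sup>L M (\<lambda>w. lam_g (fst w) * \<gamma> (fst w))"
        by (rule key[OF prob fst_m snd_m stat _ msr(4,6) gm lamg_fix])
           (use prod lamg_F mug_F gF in auto)
      also have "\<dots> = integral\<^sup>L M Qg" unfolding Qg_def using prod[OF lamg_F gF] by simp
      finally show ?thesis .
    qed
    define Ah where "Ah = (\<lambda>\<tau>. integral\<^sup>L M (\<lambda>w. mfun \<theta> (\<lambda>s. h s + \<tau> * \<gamma> s) g (fst w)))"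
    have dh: "\<forall>\<^sub>F \<tau> in nhds 0. integrable M (\<lambda>w. mfun \<theta> (\<lambda>s. h s + \<tau> * \<gamma> s) g (fst w))"
      "(Ah has_real_derivative integral\<^sup>L M (\<lambda>w. mu_h (fst w) * \<gamma> (fst w))) (at 0)"
      using deriv_h[OF gm gb] unfolding Ah_def by auto
    have evh: "\<forall>\<^sub>F \<tau> in nhds 0. integral\<^sup>L M (zeta lam_h lam_g z e \<beta> \<theta> (\<lambda>s. h s + \<tau> * \<gamma> s) g)
        = Ah \<tau> - (integral\<^sup>L M P + \<tau> * integral\<^sup>L M Qh) - integral\<^sup>L M R"
      using dh(1)
    proof eventually_elim
      case (elim \<tau>)
      have "integral\<^sup>L M (zeta lam_h lam_g z e \<beta> \<theta> (\<lambda>s. h s + \<tau> * \<gamma> s) g) =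
        integral\<^sup>L M (\<lambda>w. mfun \<theta> (\<lambda>s. h s + \<tau> * \<gamma> s) g (fst w) - (P w + \<tau> * Qh w) - R w)"
        unfolding zeta_def P_def Qh_def R_def by (rule Bochner_Integration.integral_cong) (auto simp: algebra_simps)
      also have "\<dots> = Ah \<tau> - (integral\<^sup>L M P + \<tau> * integral\<^sup>L M Qh) - integral\<^sup>L M R"
        unfolding Ah_def using elim iP iQh iR by simp
      finally show ?case .
    qed
    have "((\<lambda>\<tau>. Ah \<tau> - (integral\<^sup>L M P + \<tau> * integral\<^sup>L M Qh) - integral\<^sup>L M R)
        has_real_derivative (integral\<^sup>L M (\<lambda>w. mu_h (fst w) * \<gamma> (fst w)) - (0 + 1 * integral\<^sup>L M Qh) - 0)) (at 0)"
      by (intro derivative_intros dh(2)) (rule DERIV_cmult_right[OF DERIV_ident])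
    then show "((\<lambda>\<tau>. integral\<^sup>L M (zeta lam_h lam_g z e \<beta> \<theta> (\<lambda>s. h s + \<tau> * \<gamma> s) g)) has_real_derivative 0) (at 0)"
      using DERIV_cong_ev[OF refl evh, of _ 0] kh by simp
    define Ag where "Ag = (\<lambda>\<tau>. integral\<^sup>L M (\<lambda>w. mfun \<theta> h (\<lambda>s. g s + \<tau> * \<gamma> s) (fst w)))"
    have dg: "\<forall>\<^sub>F \<tau> in nhds 0. integrable M (\<lambda>w. mfun \<theta> h (\<lambda>s. g s + \<tau> * \<gamma> s) (fst w))"
      "(Ag has_real_derivative integral\<^sup>L M (\<lambda>w. mu_g (fst w) * \<gamma> (fst w))) (at 0)"
      using deriv_g[OF gm gb] unfolding Ag_def by auto
    have evg: "\<forall>\<^sub>F \<tau> in nhds 0. integral\<^sup>L M (zeta lam_h lam_g z e \<beta> \<theta> h (\<lambda>s. g s + \<tau> * \<gamma> s))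
        = Ag \<tau> - integral\<^sup>L M P - (integral\<^sup>L M R + \<tau> * integral\<^sup>L M Qg)"
      using dg(1)
    proof eventually_elim
      case (elim \<tau>)
      have "integral\<^sup>L M (zeta lam_h lam_g z e \<beta> \<theta> h (\<lambda>s. g s + \<tau> * \<gamma> s)) =
        integral\<^sup>L M (\<lambda>w. mfun \<theta> h (\<lambda>s. g s + \<tau> * \<gamma> s) (fst w) - P w - (R w + \<tau> * Qg w))"
        unfolding zeta_def P_def Qg_def R_def by (rule Bochner_Integration.integral_cong) (auto simp: algebra_simps)
      also have "\<dots> = Ag \<tau> - integral\<^sup>L M P - (integral\<^sup>L M R + \<tau> * integral\<^sup>L M Qg)"
        unfolding Ag_def using elim iP iQg iR by simp
      finally show ?case .
    qed
    have "((\<lambda>\<tau>. Ag \<tau> - integral\<^sup>L M P - (integral\<^sup>L M R + \<tau> * integral\<^sup>L M Qg))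
        has_real_derivative (integral\<^sup>L M (\<lambda>w. mu_g (fst w) * \<gamma> (fst w)) - 0 - (0 + 1 * integral\<^sup>L M Qg))) (at 0)"
      by (intro derivative_intros dg(2)) (rule DERIV_cmult_right[OF DERIV_ident])
    then show "((\<lambda>\<tau>. integral\<^sup>L M (zeta lam_h lam_g z e \<beta> \<theta> h (\<lambda>s. g s + \<tau> * \<gamma> s))) has_real_derivative 0) (at 0)"
      using DERIV_cong_ev[OF refl evg, of _ 0] kg by simp
  qed
qed

end
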